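(* Let $\mathbb{K}$ be a field of characteristic $0$, let $V$ be a $\mathbb{K}$-vector space of dimension $n\ge d$, and let $\mathcal{P}_d$ be a homogeneous polynomial functor of degree $d$. Then the functor $\Omega_{V,d}(\mathcal{P}_d):\mathbf{Vec}\to\mathbf{Vec}$ is a homogeneous polynomial functor of degree $d$.
   Context: $\mathbf{Vec}$ is the category of finite-dimensional $\mathbb{K}$-spaces. A functor $\mathcal{P}:\mathbf{Vec}\to\mathbf{Vec}$ is a polynomial functor if each map $\operatorname{Hom}(X,Y)\to\operatorname{Hom}(\mathcal{P}(X),\mathcal{P}(Y))$ is polynomial, homogeneous of degree $d$ if $\mathcal{P}(\lambda h)=\lambda^d\mathcal{P}(h)$. Definition: $\Omega_{V,d}(\mathcal{P}_d)(W)=\operatorname{Hom}_{\mathrm{GL}(V)}\bigl(\bigwedge^dV,\mathcal{P}_d(W\otimes V)\bigr)$, where $\mathrm{GL}(V)$ acts on $W\otimes V$ by $g\mapsto\mathrm{id}_W\otimes g$ and on $\mathcal{P}_d(W\otimes V)$ through $\mathcal{P}_d$; a linear map $h:W\to W'$ is sent to post-composition with $\mathcal{P}_d(h\otimes\mathrm{id}_V)$. (I.e. $\Omega_{V,d}(\mathcal{P}_d)=\mathcal{H}_{V,d}\circ\mathcal{P}_{V,d}\circ\mathcal{T}_V$ with $\mathcal{T}_V=-\otimes V$ and $\mathcal{H}_{V,d}=\operatorname{Hom}_{\mathrm{GL}(V)}(\bigwedge^dV,-)$.) *)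

theory Defs
  imports "Jordan_Normal_Form.Determinant" "Jordan_Normal_Form.DL_Submatrix"
begin

text \<open>We work on the skeleton of Vec: objects are the spaces K^m (m :: nat), and a
linear map K^m -> K^k is a k x m matrix (Jordan_Normal_Form matrices).\<close>

inductive poly_fun :: "nat \<Rightarrow> nat \<Rightarrow> ('a::comm_ring_1 mat \<Rightarrow> 'a) \<Rightarrow> bool"
  for k m :: nat where
  pf_const: "poly_fun k m (\<lambda>h. c)"
| pf_entry: "i < k \<Longrightarrow> j < m \<Longrightarrow> poly_fun k m (\<lambda>h. h $$ (i, j))"
| pf_add: "poly_fun k m f \<Longrightarrow> poly_fun k m g \<Longrightarrow> poly_fun k m (\<lambda>h. f h + g h)"
| pf_mult: "poly_fun k m f \<Longrightarrow> poly_fun k m g \<Longrightarrow> poly_fun k m (\<lambda>h. f h * g h)"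

definition polynomial_on :: "nat \<Rightarrow> nat \<Rightarrow> ('a::comm_ring_1 mat \<Rightarrow> 'a) \<Rightarrow> bool" where
  "polynomial_on k m f \<longleftrightarrow> (\<exists>p. poly_fun k m p \<and> (\<forall>h \<in> carrier_mat k m. f h = p h))"

text \<open>A homogeneous polynomial functor of degree d, with P(K^m) = K^(Pdim m)
 and P(h) = Pmat h (a Pdim k x Pdim m matrix for h : K^m -> K^k).\<close>
definition hom_poly_functor :: "(nat \<Rightarrow> nat) \<Rightarrow> ('a::comm_ring_1 mat \<Rightarrow> 'a mat) \<Rightarrow> nat \<Rightarrow> bool" where
  "hom_poly_functor Pdim Pmat d \<longleftrightarrow>
     (\<forall>k m h. h \<in> carrier_mat k m \<longrightarrow> Pmat h \<in> carrier_mat (Pdim k) (Pdim m)) \<and>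
     (\<forall>m. Pmat (1\<^sub>m m) = 1\<^sub>m (Pdim m)) \<and>
     (\<forall>k l m g h. g \<in> carrier_mat k l \<longrightarrow> h \<in> carrier_mat l m \<longrightarrow> Pmat (g * h) = Pmat g * Pmat h) \<and>
     (\<forall>k m i j. i < Pdim k \<longrightarrow> j < Pdim m \<longrightarrow> polynomial_on k m (\<lambda>h. Pmat h $$ (i, j))) \<and>
     (\<forall>k m c h. h \<in> carrier_mat k m \<longrightarrow> Pmat (c \<cdot>\<^sub>m h) = (c ^ d) \<cdot>\<^sub>m Pmat h)"

text \<open>A homogeneous polynomial functor of degree d whose value on K^m is a linear
 subspace S m of the space of R m x C m matrices, and whose value on a morphism h is
 the (linear) map M h.\<close>
definition hom_poly_subfunctor ::
  "(nat \<Rightarrow> nat) \<Rightarrow> (nat \<Rightarrow> nat) \<Rightarrow> (nat \<Rightarrow> 'a::comm_ring_1 mat set) \<Rightarrow> ('a mat \<Rightarrow> 'a mat \<Rightarrow> 'a mat) \<Rightarrow> nat \<Rightarrow> bool" where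
  "hom_poly_subfunctor R C S M d \<longleftrightarrow>
     (\<forall>m. S m \<subseteq> carrier_mat (R m) (C m) \<and> 0\<^sub>m (R m) (C m) \<in> S m \<and>
          (\<forall>x \<in> S m. \<forall>y \<in> S m. x + y \<in> S m) \<and> (\<forall>c. \<forall>x \<in> S m. c \<cdot>\<^sub>m x \<in> S m)) \<and>
     (\<forall>k m h. h \<in> carrier_mat k m \<longrightarrow>
        (\<forall>x \<in> S m. M h x \<in> S k) \<and>
        (\<forall>x \<in> S m. \<forall>y \<in> S m. M h (x + y) = M h x + M h y) \<and>
        (\<forall>c. \<forall>x \<in> S m. M h (c \<cdot>\<^sub>m x) = c \<cdot>\<^sub>m M h x)) \<and>
     (\<forall>m. \<forall>x \<in> S m. M (1\<^sub>m m) x = x) \<and>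
     (\<forall>k l m g h. g \<in> carrier_mat k l \<longrightarrow> h \<in> carrier_mat l m \<longrightarrow>
        (\<forall>x \<in> S m. M (g * h) x = M g (M h x))) \<and>
     (\<forall>k m. \<forall>x \<in> S m. \<forall>i j. i < R k \<longrightarrow> j < C k \<longrightarrow> polynomial_on k m (\<lambda>h. M h x $$ (i, j))) \<and>
     (\<forall>k m c h. h \<in> carrier_mat k m \<longrightarrow> (\<forall>x \<in> S m. M (c \<cdot>\<^sub>m h) x = (c ^ d) \<cdot>\<^sub>m M h x))"

text \<open>Kronecker product: for A : K^a -> K^b and B : K^c -> K^e, kron A B : K^a (x) K^c -> K^b (x) K^e,
 where the basis vector e_i (x) f_j of K^p (x) K^q = K^(p*q) has index i*q + j.\<close>
definition kron :: "'a::times mat \<Rightarrow> 'a mat \<Rightarrow> 'a mat" where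
  "kron A B = mat (dim_row A * dim_row B) (dim_col A * dim_col B)
     (\<lambda>(i, j). A $$ (i div dim_row B, j div dim_col B) * B $$ (i mod dim_row B, j mod dim_col B))"

text \<open>Basis of the d-th exterior power of K^n: e_{i1} ^ ... ^ e_{id} with i1 < ... < id,
 listed in lexicographic order.\<close>
definition wedge_idx :: "nat \<Rightarrow> nat \<Rightarrow> nat list list" where
  "wedge_idx n d = filter (sorted_wrt (<)) (List.n_lists d [0..<n])"

text \<open>Matrix of the induced map on the d-th exterior power (d x d minors).\<close>
definition wedge_mat :: "nat \<Rightarrow> 'a::comm_ring_1 mat \<Rightarrow> 'a mat" where
  "wedge_mat d g = (let I = wedge_idx (dim_row g) d; J = wedge_idx (dim_col g) d in
     mat (length I) (length J) (\<lambda>(a, b). det (submatrix g (set (I ! a)) (set (J ! b)))))"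

text \<open>Omega_{V,d}(P)(K^m) = Hom_{GL(V)}(wedge^d V, P(K^m (x) V)) for V = K^n, realised as the
 Pdim(m*n) x binom(n,d) matrices x with P(id_W (x) g) x = x (wedge^d g) for all g in GL(V).\<close>
definition Omega_obj :: "(nat \<Rightarrow> nat) \<Rightarrow> ('a::comm_ring_1 mat \<Rightarrow> 'a mat) \<Rightarrow> nat \<Rightarrow> nat \<Rightarrow> nat \<Rightarrow> 'a mat set" where
  "Omega_obj Pdim Pmat n d m =
     {x \<in> carrier_mat (Pdim (m * n)) (length (wedge_idx n d)).
        \<forall>g \<in> carrier_mat n n. invertible_mat g \<longrightarrow>
          Pmat (kron (1\<^sub>m m) g) * x = x * wedge_mat d g}"

definition Omega_mor :: "('a::comm_ring_1 mat \<Rightarrow> 'a mat) \<Rightarrow> nat \<Rightarrow> 'a mat \<Rightarrow> 'a mat \<Rightarrow> 'a mat" where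
  "Omega_mor Pmat n h x = Pmat (kron h (1\<^sub>m n)) * x"

end

theory Submission
  imports Defs
begin

lemma sum_shift_add: "(\<Sum>l<N+(s::nat). f l) = (\<Sum>l<N. f l) + (\<Sum>b<s. (f (N+b) :: 'b::comm_monoid_add))"
  by (induction s) (simp_all add: add.assoc)

lemma sum_split_mult: "(\<Sum>l<q*(s::nat). f l) = (\<Sum>a<q. \<Sum>b<s. (f (a*s+b) :: 'b::comm_monoid_add))"
proof (induction q)
  case 0 then show ?case by simp
next
  case (Suc q)
  have "(\<Sum>l<Suc q*s. f l) = (\<Sum>l<q*s + s. f l)" by (simp add: add.commute)
  also have "\<dots> = (\<Sum>l<q*s. f l) + (\<Sum>b<s. f (q*s+b))"
    by (rule sum_shift_add)
  finally show ?case using Suc by simp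
qed

lemma kron_dims[simp]: "dim_row (kron A B) = dim_row A * dim_row B" "dim_col (kron A B) = dim_col A * dim_col B"
  unfolding kron_def by (rule dim_row_mat, rule dim_col_mat)
lemma kron_carrier[simp]: "A \<in> carrier_mat p q \<Longrightarrow> B \<in> carrier_mat r s \<Longrightarrow> kron A B \<in> carrier_mat (p*r) (q*s)"
  unfolding carrier_mat_def by simp
lemma kron_index: "i < dim_row A * dim_row B \<Longrightarrow> j < dim_col A * dim_col B \<Longrightarrow>
  kron A B $$ (i,j) = A $$ (i div dim_row B, j div dim_col B) * B $$ (i mod dim_row B, j mod dim_col B)"
  unfolding kron_def by (subst index_mat) auto
lemma kron_mult:
  fixes A :: "'a::comm_ring_1 mat"
  assumes A: "A \<in> carrier_mat p q" and B: "B \<in> carrier_mat r s"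
    and C: "C \<in> carrier_mat q t" and D: "D \<in> carrier_mat s u"
  shows "kron A B * kron C D = kron (A*C) (B*D)"
proof (rule eq_matI)
  fix i j assume i: "i < dim_row (kron (A*C) (B*D))" and j: "j < dim_col (kron (A*C) (B*D))"
  then have i': "i < p*r" and j': "j < t*u" using A B C D by auto
  have r0: "r > 0" using i' by (cases r) auto
  have u0: "u > 0" using j' by (cases u) auto
  have id: "i div r < p" "j div u < t" using i' j' by (auto simp: less_mult_imp_div_less)
  have "(kron A B * kron C D) $$ (i,j) = (\<Sum>l<q*s. kron A B $$ (i,l) * kron C D $$ (l,j))"
    using A B C D i' j' by (simp add: scalar_prod_def lessThan_atLeast0)
  also have "\<dots> = (\<Sum>a<q. \<Sum>b<s. kron A B $$ (i,a*s+b) * kron C D $$ (a*s+b,j))"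
    by (rule sum_split_mult)
  also have "\<dots> = (\<Sum>a<q. \<Sum>b<s. (A $$ (i div r, a) * C $$ (a, j div u)) * (B $$ (i mod r, b) * D $$ (b, j mod u)))"
  proof (intro sum.cong refl)
    fix a b assume a: "a \<in> {..<q}" and b: "b \<in> {..<s}"
    have ab1: "a*s+b < (a+1)*s" using b by simp
    have ab2: "(a+1)*s \<le> q*s" using a by (intro mult_le_mono1) simp
    have ab: "a*s+b < q*s" using ab1 ab2 by linarith
    have "(a*s+b) div s = a" "(a*s+b) mod s = b" using b by auto
    then show "kron A B $$ (i,a*s+b) * kron C D $$ (a*s+b,j) = (A $$ (i div r, a) * C $$ (a, j div u)) * (B $$ (i mod r, b) * D $$ (b, j mod u))"
      using A B C D i' j' ab by (simp add: kron_index ac_simps)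
  qed
  also have "\<dots> = (\<Sum>a<q. A $$ (i div r, a) * C $$ (a, j div u)) * (\<Sum>b<s. B $$ (i mod r, b) * D $$ (b, j mod u))"
    by (simp add: sum_product)
  also have "\<dots> = kron (A*C) (B*D) $$ (i,j)"
    using A B C D i' j' id r0 u0 by (simp add: kron_index scalar_prod_def lessThan_atLeast0)
  finally show "(kron A B * kron C D) $$ (i,j) = kron (A*C) (B*D) $$ (i,j)" .
qed (use assms in auto)

lemma kron_one: "kron (1\<^sub>m m) (1\<^sub>m n) = (1\<^sub>m (m*n) :: 'a::comm_ring_1 mat)"
proof (rule eq_matI)
  fix i j assume "i < dim_row (1\<^sub>m (m*n) :: 'a mat)" "j < dim_col (1\<^sub>m (m*n) :: 'a mat)"
  then have i: "i < m*n" and j: "j < m*n" by auto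
  have "(i div n = j div n \<and> i mod n = j mod n) \<longleftrightarrow> i = j"
    by (metis div_mult_mod_eq)
  then show "kron (1\<^sub>m m) (1\<^sub>m n) $$ (i,j) = (1\<^sub>m (m*n) :: 'a mat) $$ (i,j)"
  proof -
    have n0: "n > 0" using i by (cases n) auto
    show ?thesis using i j n0 \<open>(i div n = j div n \<and> i mod n = j mod n) \<longleftrightarrow> i = j\<close>
      by (auto simp: kron_index less_mult_imp_div_less)
  qed
qed auto

lemma kron_smult: "kron (c \<cdot>\<^sub>m A) B = c \<cdot>\<^sub>m kron A (B :: 'a::comm_ring_1 mat)"
  by (rule eq_matI) (auto simp: kron_index less_mult_imp_div_less)


lemma polynomial_on_cong: "polynomial_on k m f \<Longrightarrow> (\<And>h. h \<in> carrier_mat k m \<Longrightarrow> f h = g h) \<Longrightarrow> polynomial_on k m g"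
  unfolding polynomial_on_def by metis

lemma polynomial_on_const: "polynomial_on k m (\<lambda>h. c)"
  unfolding polynomial_on_def by (blast intro: pf_const)

lemma polynomial_on_add: "polynomial_on k m f \<Longrightarrow> polynomial_on k m g \<Longrightarrow> polynomial_on k m (\<lambda>h. f h + g h)"
  unfolding polynomial_on_def
proof (elim exE conjE)
  fix p q assume "poly_fun k m p" "\<forall>h\<in>carrier_mat k m. f h = p h" "poly_fun k m q" "\<forall>h\<in>carrier_mat k m. g h = q h"
  then show "\<exists>r. poly_fun k m r \<and> (\<forall>h\<in>carrier_mat k m. f h + g h = r h)"
    by (intro exI[of _ "\<lambda>h. p h + q h"]) (auto intro: pf_add)
qed

lemma polynomial_on_mult: "polynomial_on k m f \<Longrightarrow> polynomial_on k m g \<Longrightarrow> polynomial_on k m (\<lambda>h. f h * g h)"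
  unfolding polynomial_on_def
proof (elim exE conjE)
  fix p q assume "poly_fun k m p" "\<forall>h\<in>carrier_mat k m. f h = p h" "poly_fun k m q" "\<forall>h\<in>carrier_mat k m. g h = q h"
  then show "\<exists>r. poly_fun k m r \<and> (\<forall>h\<in>carrier_mat k m. f h * g h = r h)"
    by (intro exI[of _ "\<lambda>h. p h * q h"]) (auto intro: pf_mult)
qed

lemma polynomial_on_sum: "finite A \<Longrightarrow> (\<And>a. a \<in> A \<Longrightarrow> polynomial_on k m (f a)) \<Longrightarrow> polynomial_on k m (\<lambda>h. \<Sum>a\<in>A. f a h)"
proof (induction A rule: finite_induct)
  case empty then show ?case by (simp add: polynomial_on_const)
next
  case (insert a A)
  then show ?case by (simp add: polynomial_on_add)
qed

lemma poly_fun_kron: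
  assumes "poly_fun (k*n) (m*n) p"
  shows "\<exists>q. poly_fun k m q \<and> (\<forall>h\<in>carrier_mat k m. p (kron h (1\<^sub>m n)) = (q h :: 'a::comm_ring_1))"
  using assms
proof (induction rule: poly_fun.induct)
  case (pf_const c)
  then show ?case by (intro exI[of _ "\<lambda>h. c"]) (auto intro: poly_fun.pf_const)
next
  case (pf_entry i j)
  have n0: "n > 0" using pf_entry by (cases n) auto
  have id: "i div n < k" "j div n < m" using pf_entry by (auto simp: less_mult_imp_div_less)
  let ?q = "\<lambda>h::'a mat. h $$ (i div n, j div n) * (if i mod n = j mod n then 1 else 0)"
  have "poly_fun k m ?q" using id by (intro poly_fun.pf_mult poly_fun.pf_entry poly_fun.pf_const)
  moreover have "\<forall>h\<in>carrier_mat k m. kron h (1\<^sub>m n) $$ (i, j) = ?q h"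
    using pf_entry n0 by (auto simp: kron_index)
  ultimately show ?case by blast
next
  case (pf_add f g)
  then obtain p q where "poly_fun k m p" "\<forall>h\<in>carrier_mat k m. f (kron h (1\<^sub>m n)) = p h"
    "poly_fun k m q" "\<forall>h\<in>carrier_mat k m. g (kron h (1\<^sub>m n)) = q h" by blast
  then show ?case by (intro exI[of _ "\<lambda>h. p h + q h"]) (auto intro: poly_fun.pf_add)
next
  case (pf_mult f g)
  then obtain p q where "poly_fun k m p" "\<forall>h\<in>carrier_mat k m. f (kron h (1\<^sub>m n)) = p h"
    "poly_fun k m q" "\<forall>h\<in>carrier_mat k m. g (kron h (1\<^sub>m n)) = q h" by blast
  then show ?case by (intro exI[of _ "\<lambda>h. p h * q h"]) (auto intro: poly_fun.pf_mult)
qed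

lemma polynomial_on_kron:
  assumes "polynomial_on (k*n) (m*n) (f :: 'a::comm_ring_1 mat \<Rightarrow> 'a)"
  shows "polynomial_on k m (\<lambda>h. f (kron h (1\<^sub>m n)))"
proof -
  obtain p where p: "poly_fun (k*n) (m*n) p" "\<forall>h\<in>carrier_mat (k*n) (m*n). f h = p h"
    using assms unfolding polynomial_on_def by blast
  obtain q where q: "poly_fun k m q" "\<forall>h\<in>carrier_mat k m. p (kron h (1\<^sub>m n)) = q h"
    using poly_fun_kron[OF p(1)] by blast
  have "\<forall>h\<in>carrier_mat k m. f (kron h (1\<^sub>m n)) = q h"
  proof
    fix h :: "'a mat" assume h: "h \<in> carrier_mat k m"
    then have "kron h (1\<^sub>m n) \<in> carrier_mat (k*n) (m*n)" by simp
    then show "f (kron h (1\<^sub>m n)) = q h" using p(2) q(2) h by simp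
  qed
  then show ?thesis using q(1) unfolding polynomial_on_def by blast
qed


theorem mainTheorem9:
  fixes Pdim :: "nat \<Rightarrow> nat" and Pmat :: "'a::field_char_0 mat \<Rightarrow> 'a mat" and n d :: nat
  assumes "hom_poly_functor Pdim Pmat d"
    and "d \<le> n"
  shows "hom_poly_subfunctor (\<lambda>m. Pdim (m * n)) (\<lambda>m. length (wedge_idx n d))
           (Omega_obj Pdim Pmat n d) (Omega_mor Pmat n) d"
proof -
  note H = assms(1)[unfolded hom_poly_functor_def]
  have P1: "\<And>k m h. h \<in> carrier_mat k m \<Longrightarrow> Pmat h \<in> carrier_mat (Pdim k) (Pdim m)"
    using H[THEN conjunct1] by blast
  have P2: "\<And>m. Pmat (1\<^sub>m m) = 1\<^sub>m (Pdim m)"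
    using H[THEN conjunct2, THEN conjunct1] by blast
  have P3: "\<And>k l m g h. g \<in> carrier_mat k l \<Longrightarrow> h \<in> carrier_mat l m \<Longrightarrow> Pmat (g * h) = Pmat g * Pmat h"
    using H[THEN conjunct2, THEN conjunct2, THEN conjunct1] by blast
  have P4: "\<And>k m i j. i < Pdim k \<Longrightarrow> j < Pdim m \<Longrightarrow> polynomial_on k m (\<lambda>h. Pmat h $$ (i, j))"
    using H[THEN conjunct2, THEN conjunct2, THEN conjunct2, THEN conjunct1] by blast
  have P5: "\<And>k m c h. h \<in> carrier_mat k m \<Longrightarrow> Pmat (c \<cdot>\<^sub>m h) = (c ^ d) \<cdot>\<^sub>m Pmat h"
    using H[THEN conjunct2, THEN conjunct2, THEN conjunct2, THEN conjunct2] by blast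
  define L where "L = length (wedge_idx n d)"
  define S where "S = Omega_obj Pdim Pmat n d"
  define M where "M = Omega_mor Pmat n"
  have W: "wedge_mat d g \<in> carrier_mat L L" if "g \<in> carrier_mat n n" for g
    using that unfolding wedge_mat_def L_def Let_def carrier_mat_def by simp
  have mem: "x \<in> S m \<longleftrightarrow> x \<in> carrier_mat (Pdim (m*n)) L \<and> (\<forall>g\<in>carrier_mat n n. invertible_mat g \<longrightarrow>
      Pmat (kron (1\<^sub>m m) g) * x = x * wedge_mat d g)" for x m
    unfolding S_def Omega_obj_def L_def by simp
  have KP: "Pmat (kron (1\<^sub>m m) g) \<in> carrier_mat (Pdim (m*n)) (Pdim (m*n))" if "g \<in> carrier_mat n n" for m g
    using P1[OF kron_carrier[OF one_carrier_mat that]] .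
  have KH: "Pmat (kron h (1\<^sub>m n)) \<in> carrier_mat (Pdim (k*n)) (Pdim (m*n))" if "h \<in> carrier_mat k m" for h k m
    using P1[OF kron_carrier[OF that one_carrier_mat]] .
  have Mdef: "M h x = Pmat (kron h (1\<^sub>m n)) * x" for h x unfolding M_def Omega_mor_def by simp

  have S1: "S m \<subseteq> carrier_mat (Pdim (m*n)) L" for m using mem by blast
  have S2: "0\<^sub>m (Pdim (m*n)) L \<in> S m" for m
  proof -
    have "Pmat (kron (1\<^sub>m m) g) * 0\<^sub>m (Pdim (m*n)) L = 0\<^sub>m (Pdim (m*n)) L * wedge_mat d g"
      if g: "g \<in> carrier_mat n n" for g
      using KP[OF g] W[OF g] by (simp add: right_mult_zero_mat[of _ _ "Pdim (m*n)"] left_mult_zero_mat[of _ L L])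
    then show ?thesis unfolding mem by simp
  qed
  have S3: "x + y \<in> S m" if x: "x \<in> S m" and y: "y \<in> S m" for x y m
  proof -
    have xc: "x \<in> carrier_mat (Pdim (m*n)) L" and yc: "y \<in> carrier_mat (Pdim (m*n)) L" using x y mem by blast+
    have "Pmat (kron (1\<^sub>m m) g) * (x + y) = (x + y) * wedge_mat d g"
      if g: "g \<in> carrier_mat n n" and gi: "invertible_mat g" for g
    proof -
      have "Pmat (kron (1\<^sub>m m) g) * (x + y) = Pmat (kron (1\<^sub>m m) g) * x + Pmat (kron (1\<^sub>m m) g) * y"
        by (rule mult_add_distrib_mat[OF KP[OF g] xc yc])
      also have "\<dots> = x * wedge_mat d g + y * wedge_mat d g" using x y g gi mem by auto
      also have "\<dots> = (x + y) * wedge_mat d g" by (rule add_mult_distrib_mat[OF xc yc W[OF g], symmetric])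
      finally show ?thesis .
    qed
    then show ?thesis unfolding mem using xc yc by simp
  qed
  have S4: "c \<cdot>\<^sub>m x \<in> S m" if x: "x \<in> S m" for x m c
  proof -
    have xc: "x \<in> carrier_mat (Pdim (m*n)) L" using x mem by blast
    have "Pmat (kron (1\<^sub>m m) g) * (c \<cdot>\<^sub>m x) = (c \<cdot>\<^sub>m x) * wedge_mat d g"
      if g: "g \<in> carrier_mat n n" and gi: "invertible_mat g" for g
    proof -
      have "Pmat (kron (1\<^sub>m m) g) * (c \<cdot>\<^sub>m x) = c \<cdot>\<^sub>m (Pmat (kron (1\<^sub>m m) g) * x)"
        by (rule mult_smult_distrib[OF KP[OF g] xc])
      also have "\<dots> = c \<cdot>\<^sub>m (x * wedge_mat d g)" using x g gi mem by auto
      also have "\<dots> = (c \<cdot>\<^sub>m x) * wedge_mat d g" by (rule mult_smult_assoc_mat[OF xc W[OF g], symmetric])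
      finally show ?thesis .
    qed
    then show ?thesis unfolding mem using xc by simp
  qed

  have T1: "M h x \<in> S k" if h: "h \<in> carrier_mat k m" and x: "x \<in> S m" for h x k m
  proof -
    have xc: "x \<in> carrier_mat (Pdim (m*n)) L" using x mem by blast
    have "Pmat (kron (1\<^sub>m k) g) * (Pmat (kron h (1\<^sub>m n)) * x) = (Pmat (kron h (1\<^sub>m n)) * x) * wedge_mat d g"
      if g: "g \<in> carrier_mat n n" and gi: "invertible_mat g" for g
    proof -
      have e1: "kron (1\<^sub>m k) g * kron h (1\<^sub>m n) = kron h g"
        using kron_mult[OF one_carrier_mat g h one_carrier_mat] h g by simp
      have e2: "kron h (1\<^sub>m n) * kron (1\<^sub>m m) g = kron h g"
        using kron_mult[OF h one_carrier_mat one_carrier_mat g] h g by simp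
      have "Pmat (kron (1\<^sub>m k) g) * (Pmat (kron h (1\<^sub>m n)) * x) = (Pmat (kron (1\<^sub>m k) g) * Pmat (kron h (1\<^sub>m n))) * x"
        by (rule assoc_mult_mat[symmetric, OF KP[OF g, of k] KH[OF h] xc])
      also have "\<dots> = Pmat (kron h g) * x"
        using P3[OF kron_carrier[OF one_carrier_mat g] kron_carrier[OF h one_carrier_mat[of n]]] e1 by simp
      also have "\<dots> = (Pmat (kron h (1\<^sub>m n)) * Pmat (kron (1\<^sub>m m) g)) * x"
        using P3[OF kron_carrier[OF h one_carrier_mat[of n]] kron_carrier[OF one_carrier_mat g]] e2 by simp
      also have "\<dots> = Pmat (kron h (1\<^sub>m n)) * (Pmat (kron (1\<^sub>m m) g) * x)"
        by (rule assoc_mult_mat[OF KH[OF h] KP[OF g, of m] xc])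
      also have "\<dots> = Pmat (kron h (1\<^sub>m n)) * (x * wedge_mat d g)" using x g gi mem by auto
      also have "\<dots> = (Pmat (kron h (1\<^sub>m n)) * x) * wedge_mat d g"
        using KH[OF h] xc W[OF g] by simp
      finally show ?thesis .
    qed
    moreover have "Pmat (kron h (1\<^sub>m n)) * x \<in> carrier_mat (Pdim (k*n)) L" using KH[OF h] xc by simp
    ultimately show ?thesis unfolding mem Mdef by simp
  qed
  have T2: "M h (x + y) = M h x + M h y" if h: "h \<in> carrier_mat k m" and x: "x \<in> S m" and y: "y \<in> S m" for h x y k m
    using mult_add_distrib_mat[OF KH[OF h]] x y S1 unfolding Mdef by blast
  have T3: "M h (c \<cdot>\<^sub>m x) = c \<cdot>\<^sub>m M h x" if h: "h \<in> carrier_mat k m" and x: "x \<in> S m" for h x k m c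
    using mult_smult_distrib[OF KH[OF h]] x S1 unfolding Mdef by blast
  have U1: "M (1\<^sub>m m) x = x" if x: "x \<in> S m" for x m
  proof -
    have xc: "x \<in> carrier_mat (Pdim (m*n)) L" using x S1 by blast
    show ?thesis unfolding Mdef kron_one P2 by (rule left_mult_one_mat[OF xc])
  qed
  have U2: "M (g * h) x = M g (M h x)" if g: "g \<in> carrier_mat k l" and h: "h \<in> carrier_mat l m" and x: "x \<in> S m" for g h x k l m
  proof -
    have xc: "x \<in> carrier_mat (Pdim (m*n)) L" using x mem by blast
    have e: "kron g (1\<^sub>m n) * kron h (1\<^sub>m n) = kron (g * h) (1\<^sub>m n)"
      using kron_mult[OF g one_carrier_mat h one_carrier_mat] by simp
    have "M (g * h) x = (Pmat (kron g (1\<^sub>m n)) * Pmat (kron h (1\<^sub>m n))) * x"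
      unfolding Mdef using P3[OF kron_carrier[OF g one_carrier_mat[of n]] kron_carrier[OF h one_carrier_mat[of n]]] e by simp
    also have "\<dots> = M g (M h x)" unfolding Mdef using KH[OF g] KH[OF h] xc by simp
    finally show ?thesis .
  qed
  have U3: "polynomial_on k m (\<lambda>h. M h x $$ (i, j))" if x: "x \<in> S m" and i: "i < Pdim (k*n)" and j: "j < L" for k m x i j
  proof -
    have xc: "x \<in> carrier_mat (Pdim (m*n)) L" using x mem by blast
    have "polynomial_on k m (\<lambda>h. \<Sum>l\<in>{0..<Pdim (m*n)}. Pmat (kron h (1\<^sub>m n)) $$ (i, l) * x $$ (l, j))"
    proof (rule polynomial_on_sum)
      fix l assume l: "l \<in> {0..<Pdim (m*n)}"
      show "polynomial_on k m (\<lambda>h. Pmat (kron h (1\<^sub>m n)) $$ (i, l) * x $$ (l, j))"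
        using polynomial_on_kron[OF P4[OF i, of l "m*n"]] l
        by (intro polynomial_on_mult polynomial_on_const) auto
    qed simp
    then show ?thesis
    proof (rule polynomial_on_cong)
      fix h :: "'a mat" assume h: "h \<in> carrier_mat k m"
      have Hc: "Pmat (kron h (1\<^sub>m n)) \<in> carrier_mat (Pdim (k*n)) (Pdim (m*n))" using KH[OF h] .
      show "(\<Sum>l\<in>{0..<Pdim (m*n)}. Pmat (kron h (1\<^sub>m n)) $$ (i, l) * x $$ (l, j)) = M h x $$ (i, j)"
        unfolding Mdef using Hc xc i j by (simp add: scalar_prod_def)
    qed
  qed
  have U4: "M (c \<cdot>\<^sub>m h) x = (c ^ d) \<cdot>\<^sub>m M h x" if h: "h \<in> carrier_mat k m" and x: "x \<in> S m" for k m c h x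
  proof -
    have xc: "x \<in> carrier_mat (Pdim (m*n)) L" using x mem by blast
    show ?thesis unfolding Mdef kron_smult P5[OF kron_carrier[OF h one_carrier_mat[of n]]]
      by (rule mult_smult_assoc_mat[OF KH[OF h] xc])
  qed
  show ?thesis
    unfolding hom_poly_subfunctor_def S_def[symmetric] M_def[symmetric] L_def[symmetric]
    by (intro conjI allI impI ballI) (simp_all add: S1 S2 S3 S4 T1 T2 T3 U1 U2 U3 U4)
qed

end
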